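(* Let $r\ge 2$ be an integer, let $\varphi$ be an instance of 2-Clause 3-SAT, and let $G(\varphi)$ be the graph constructed from $\varphi$ and $r$ as described in the context. If $\mathrm{col}_r(G(\varphi)) \leq 6$, then $\varphi$ has a satisfying assignment.
   Context: 2-Clause 3-SAT: given a CNF formula $\varphi$ with clauses $c_1,\dots,c_m$ over variables $x_1,\dots,x_n$ in which each clause contains at most 3 literals and each literal ($x_j$ or $\overline{x}_j$) appears in exactly 2 clauses, decide whether $\varphi$ is satisfiable. It is assumed throughout that no variable appears twice in a single clause and there are no single-literal clauses (so each clause has 2 or 3 literals). An $\ell$-subdivided edge between $a$ and $b$ is an induced path with $\ell$ internal vertices (subdivision vertices) joining $a$ and $b$, whose internal vertices have no other neighbors. Construction of $G(\varphi)$: for each clause $c_i$ create a vertex $u_i$. For each variable $x_j$ create two vertices $v_j,v'_j$ (for literals $x_j$, $\overline{x}_j$) joined by an edge. For each clause $c_i$ containing literal $x_j$ (resp. $\overline{x}_j$), join $u_i$ and $v_j$ (resp. $v'_j$) by an $(r-1)$-subdivided edge. Add a 7-clique on new vertices $w_1,\dots,w_7$. For each clause $c_i$ add edges from $u_i$ to $w_1,\dots,w_4$, and if $c_i$ has only 2 literals also an edge from $u_i$ to $w_5$. For each variable $x_j$ add edges from $v_j$ to $w_2,w_3,w_4$ and from $v'_j$ to $w_5,w_6,w_7$. Coloring numbers: for a graph $G=(V,E)$ and a total order $\sigma$ of $V$, a vertex $v\neq u$ is $r$-reachable from $u$ if $u<_\sigma v$ and there is a $u$–$v$ path of length at most $r$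 all of whose vertices other than $u,v$ precede $u$ in $\sigma$; $\mathrm{reach}_r(u,G_\sigma)$ is the set of such $v$, and $\mathrm{col}_r(G)=\min_\sigma\max_u|\mathrm{reach}_r(u,G_\sigma)|$ over all total orders $\sigma$ of $V$. *)

theory Defs
  imports Main
begin

text \<open>A literal is a pair (j, b):
  (j, True) is the literal x_j, (j, False) is its negation.\<close>

type_synonym lit = "nat \<times> bool"
type_synonym clause = "lit set"

definition two_clause_3sat :: "nat \<Rightarrow> clause list \<Rightarrow> bool" where
  "two_clause_3sat n cs \<longleftrightarrow>
     (\<forall>c \<in> set cs. finite c \<and> 2 \<le> card c \<and> card c \<le> 3) \<and>
     (\<forall>c \<in> set cs. \<forall>j b b'. (j, b) \<in> c \<longrightarrow> (j, b') \<in> c \<longrightarrow> b = b') \<and>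
     (\<forall>c \<in> set cs. \<forall>(j, b) \<in> c. j < n) \<and>
     (\<forall>j < n. \<forall>b. card {i. i < length cs \<and> (j, b) \<in> cs ! i} = 2)"

definition satisfies :: "(nat \<Rightarrow> bool) \<Rightarrow> clause list \<Rightarrow> bool" where
  "satisfies a cs \<longleftrightarrow> (\<forall>c \<in> set cs. \<exists>(j, b) \<in> c. a j = b)"

definition satisfiable :: "clause list \<Rightarrow> bool" where
  "satisfiable cs \<longleftrightarrow> (\<exists>a. satisfies a cs)"

text \<open>U i = u_i, V j = v_j, V' j = v'_j, W k = w_k (k = 1..7),
  S i j b k = k-th subdivision vertex (1 \<le> k \<le> r-1) of the subdivided edge
  between u_i and the vertex of literal (j,b).\<close>

datatype vtx = U nat | V nat | V' nat | W nat | S nat nat bool nat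

definition litv :: "nat \<Rightarrow> bool \<Rightarrow> vtx" where
  "litv j b = (if b then V j else V' j)"

text \<open>k-th vertex (0 \<le> k \<le> r) on the (r-1)-subdivided edge from u_i to litv j b.\<close>
definition pathv :: "nat \<Rightarrow> nat \<Rightarrow> nat \<Rightarrow> bool \<Rightarrow> nat \<Rightarrow> vtx" where
  "pathv r i j b k = (if k = 0 then U i else if k = r then litv j b else S i j b k)"

definition Gverts :: "nat \<Rightarrow> nat \<Rightarrow> clause list \<Rightarrow> vtx set" where
  "Gverts r n cs =
     {U i | i. i < length cs} \<union> {V j | j. j < n} \<union> {V' j | j. j < n} \<union>
     {W k | k. 1 \<le> k \<and> k \<le> 7} \<union>
     {S i j b k | i j b k. i < length cs \<and> (j, b) \<in> cs ! i \<and> 1 \<le> k \<and> k \<le> r - 1}"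

definition Gbase :: "nat \<Rightarrow> nat \<Rightarrow> clause list \<Rightarrow> (vtx \<times> vtx) set" where
  "Gbase r n cs =
     {(V j, V' j) | j. j < n} \<union>
     {(pathv r i j b k, pathv r i j b (Suc k)) | i j b k.
        i < length cs \<and> (j, b) \<in> cs ! i \<and> k < r} \<union>
     {(W a, W a') | a a'. 1 \<le> a \<and> a \<le> 7 \<and> 1 \<le> a' \<and> a' \<le> 7 \<and> a \<noteq> a'} \<union>
     {(U i, W a) | i a. i < length cs \<and> 1 \<le> a \<and> a \<le> 4} \<union>
     {(U i, W 5) | i. i < length cs \<and> card (cs ! i) = 2} \<union>
     {(V j, W a) | j a. j < n \<and> 2 \<le> a \<and> a \<le> 4} \<union>
     {(V' j, W a) | j a. j < n \<and> 5 \<le> a \<and> a \<le> 7}"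

definition Gedges :: "nat \<Rightarrow> nat \<Rightarrow> clause list \<Rightarrow> (vtx \<times> vtx) set" where
  "Gedges r n cs = Gbase r n cs \<union> (Gbase r n cs)\<inverse>"

definition is_order :: "'a set \<Rightarrow> 'a list \<Rightarrow> bool" where
  "is_order VV \<sigma> \<longleftrightarrow> distinct \<sigma> \<and> set \<sigma> = VV"

definition before :: "'a list \<Rightarrow> 'a \<Rightarrow> 'a \<Rightarrow> bool" where
  "before \<sigma> x y \<longleftrightarrow> (\<exists>i j. i < j \<and> j < length \<sigma> \<and> \<sigma> ! i = x \<and> \<sigma> ! j = y)"

definition is_path :: "('a \<times> 'a) set \<Rightarrow> 'a list \<Rightarrow> bool" where
  "is_path E p \<longleftrightarrow> p \<noteq> [] \<and> distinct p \<and>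
     (\<forall>i. Suc i < length p \<longrightarrow> (p ! i, p ! Suc i) \<in> E)"

definition reach :: "nat \<Rightarrow> ('a \<times> 'a) set \<Rightarrow> 'a list \<Rightarrow> 'a \<Rightarrow> 'a set" where
  "reach r E \<sigma> u = {v. v \<noteq> u \<and> before \<sigma> u v \<and>
     (\<exists>p. is_path E p \<and> hd p = u \<and> last p = v \<and> length p - 1 \<le> r \<and>
          (\<forall>x \<in> set (butlast (tl p)). before \<sigma> x u))}"

definition col :: "nat \<Rightarrow> 'a set \<Rightarrow> ('a \<times> 'a) set \<Rightarrow> nat" where
  "col r VV E = Min ((\<lambda>\<sigma>. Max ((\<lambda>u. card (reach r E \<sigma> u)) ` VV)) ` {\<sigma>. is_order VV \<sigma>})"

end

theory Submission
  imports Defs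
begin


lemma before_mem: "before s x y \<Longrightarrow> x \<in> set s \<and> y \<in> set s"
  unfolding before_def by auto

lemma before_neq: "distinct s \<Longrightarrow> before s x y \<Longrightarrow> x \<noteq> y"
  unfolding before_def by (auto simp: nth_eq_iff_index_eq)

lemma before_trans: "distinct s \<Longrightarrow> before s x y \<Longrightarrow> before s y z \<Longrightarrow> before s x z"
proof -
  assume d: "distinct s" and a: "before s x y" and b: "before s y z"
  from a obtain i j where ij: "i < j" "j < length s" "s ! i = x" "s ! j = y" unfolding before_def by blast
  from b obtain j' k where jk: "j' < k" "k < length s" "s ! j' = y" "s ! k = z" unfolding before_def by blast
  have "j = j'" using nth_eq_iff_index_eq[OF d, of j j'] ij jk by simp
  then show ?thesis unfolding before_def using ij jk by (intro exI[of _ i] exI[of _ k]) auto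
qed

lemma before_asym: "distinct s \<Longrightarrow> before s x y \<Longrightarrow> \<not> before s y x"
  using before_trans before_neq by metis

lemma before_total: "x \<in> set s \<Longrightarrow> y \<in> set s \<Longrightarrow> x \<noteq> y \<Longrightarrow> before s x y \<or> before s y x"
proof -
  assume "x \<in> set s" "y \<in> set s" "x \<noteq> y"
  then obtain i j where "i < length s" "s ! i = x" "j < length s" "s ! j = y" by (auto simp: in_set_conv_nth)
  moreover have "i \<noteq> j" using calculation \<open>x \<noteq> y\<close> by auto
  ultimately show ?thesis unfolding before_def
    by (metis linorder_neqE_nat)
qed

lemma first_after:
  assumes ds: "distinct s" and p: "is_path E p" and hd: "hd p = u" and len: "length p - 1 \<le> r"
    and sub: "set p \<subseteq> set s" and la: "before s u (last p)"
  shows "\<exists>v \<in> set (tl p). v \<in> reach r E s u"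
proof -
  have pne: "p \<noteq> []" using p unfolding is_path_def by auto
  have dp: "distinct p" using p unfolding is_path_def by auto
  have p0: "p ! 0 = u" using hd pne by (simp add: hd_conv_nth)
  have lp: "last p = p ! (length p - 1)" using pne by (simp add: last_conv_nth)
  have "length p \<noteq> 1"
  proof
    assume "length p = 1"
    then have "last p = u" using lp p0 by simp
    then show False using la before_neq[OF ds] by blast
  qed
  moreover have "length p \<noteq> 0" using pne by simp
  ultimately have l2: "length p \<ge> 2" by linarith
  define K where "K = {k. 0 < k \<and> k < length p \<and> before s u (p ! k)}"
  have "length p - 1 \<in> K" using l2 la lp unfolding K_def by auto
  then have Kne: "K \<noteq> {}" by blast
  define k where "k = Least (\<lambda>k. k \<in> K)"
  have kK: "k \<in> K" unfolding k_def using Kne by (metis LeastI ex_in_conv)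
  have kmin: "\<And>m. m \<in> K \<Longrightarrow> k \<le> m" unfolding k_def by (simp add: Least_le)
  have k0: "0 < k" and kl: "k < length p" and kb: "before s u (p ! k)" using kK unfolding K_def by auto
  define q where "q = take (Suc k) p"
  have lq: "length q = Suc k" using kl unfolding q_def by simp
  have qn: "\<And>m. m < Suc k \<Longrightarrow> q ! m = p ! m" unfolding q_def by simp
  have qpath: "is_path E q"
    unfolding is_path_def
  proof (intro conjI allI impI)
    show "q \<noteq> []" using lq by auto
    show "distinct q" unfolding q_def using dp by simp
    fix m assume "Suc m < length q"
    then have "Suc m < length p" "m < Suc k" "Suc m < Suc k" using lq kl by auto
    then show "(q ! m, q ! Suc m) \<in> E" using p qn unfolding is_path_def
      by simp
  qed
  have "q \<noteq> []" using lq by auto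
  then have hq: "hd q = u" using qn[of 0] p0 hd_conv_nth[of q] by simp
  have lastq: "last q = p ! k" using lq qn[of k] \<open>q \<noteq> []\<close> last_conv_nth[of q] by simp
  have inter: "\<forall>x \<in> set (butlast (tl q)). before s x u"
  proof
    fix x assume "x \<in> set (butlast (tl q))"
    then obtain m where m: "m < length (butlast (tl q))" "x = butlast (tl q) ! m"
      by (auto simp: in_set_conv_nth)
    have mk: "m < k - 1" using m lq by simp
    have xm: "x = p ! Suc m" using m mk qn[of "Suc m"] lq by (simp add: nth_butlast nth_tl)
    have "Suc m \<notin> K" using kmin mk by fastforce
    then have nb: "\<not> before s u (p ! Suc m)" unfolding K_def using mk kl by auto
    have "p ! Suc m \<noteq> u" using nth_eq_iff_index_eq[OF dp, of "Suc m" 0] p0 mk kl pne by auto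
    moreover have "p ! Suc m \<in> set s" using sub mk kl by (auto intro!: nth_mem)
    moreover have "u \<in> set s" using kb before_mem by metis
    ultimately show "before s x u" using before_total nb xm by metis
  qed
  have "p ! k \<in> reach r E s u"
    unfolding reach_def
    using before_neq[OF ds kb] kb qpath hq lastq inter lq kl len by auto
  moreover have "p ! k \<in> set (tl p)" using k0 kl
  proof -
    have "tl p ! (k - 1) = p ! k" using k0 kl by (simp add: nth_tl)
    moreover have "k - 1 < length (tl p)" using k0 kl by simp
    ultimately show ?thesis by (metis nth_mem)
  qed
  ultimately show ?thesis by blast
qed



definition Pth :: "nat \<Rightarrow> nat \<Rightarrow> nat \<Rightarrow> bool \<Rightarrow> vtx list" where
  "Pth r i j b = map (pathv r i j b) [0..<Suc r]"

lemma pathv_not_W: "pathv r i j b k \<noteq> W a"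
  by (simp add: pathv_def litv_def)

lemma litv_not_W: "litv j b \<noteq> W a"
  by (simp add: litv_def)

lemma litv_not_U: "litv j b \<noteq> U i"
  by (simp add: litv_def)

lemma litv_inj: "litv j b = litv j' b' \<longleftrightarrow> j = j' \<and> b = b'"
  by (simp add: litv_def)

lemma Pth_len: "length (Pth r i j b) = Suc r"
  by (simp add: Pth_def)

lemma Pth_nth: "k \<le> r \<Longrightarrow> Pth r i j b ! k = pathv r i j b k"
  by (simp add: Pth_def nth_map nth_upt del: upt_Suc)

lemma Pth_hd: "hd (Pth r i j b) = U i"
  by (simp add: Pth_def pathv_def upt_conv_Cons del: upt_Suc)

lemma Pth_last: "r \<ge> 1 \<Longrightarrow> last (Pth r i j b) = litv j b"
proof -
  assume "r \<ge> 1"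
  have "Pth r i j b \<noteq> []" by (simp add: Pth_def)
  then have "last (Pth r i j b) = Pth r i j b ! r" by (simp add: last_conv_nth Pth_len)
  also have "\<dots> = pathv r i j b r" by (simp add: Pth_nth)
  also have "\<dots> = litv j b" using \<open>r \<ge> 1\<close> by (simp add: pathv_def)
  finally show ?thesis .
qed

lemma Pth_set: "set (Pth r i j b) = pathv r i j b ` {0..r}"
  unfolding Pth_def set_map set_upt atLeastLessThanSuc_atLeastAtMost by (rule refl)

lemma Pth_tl: "set (tl (Pth r i j b)) = pathv r i j b ` {1..r}"
  by (auto simp add: Pth_def upt_conv_Cons simp del: upt_Suc)

lemma pathv_inj: "r \<ge> 1 \<Longrightarrow> k \<le> r \<Longrightarrow> k' \<le> r \<Longrightarrow> pathv r i j b k = pathv r i j b k' \<Longrightarrow> k = k'"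
  by (auto simp add: pathv_def litv_def split: if_splits)

lemma Pth_distinct: "r \<ge> 1 \<Longrightarrow> distinct (Pth r i j b)"
  unfolding Pth_def distinct_map
proof (intro conjI)
  assume r: "r \<ge> 1"
  show "distinct [0..<Suc r]" by simp
  show "inj_on (pathv r i j b) (set [0..<Suc r])"
  proof (rule inj_onI)
    fix x y assume "x \<in> set [0..<Suc r]" "y \<in> set [0..<Suc r]" "pathv r i j b x = pathv r i j b y"
    then have "x \<le> r" "y \<le> r" "pathv r i j b x = pathv r i j b y" by auto
    then show "x = y" using pathv_inj[OF r, of x y i j b] by blast
  qed
qed

lemma pathv_tl_disj:
  assumes "r \<ge> 1" "1 \<le> k" "k \<le> r" "1 \<le> k'" "k' \<le> r"
    and "pathv r i j b k = pathv r i j' b' k'"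
  shows "j = j' \<and> b = b'"
  using assms unfolding pathv_def litv_def by (cases b; cases b'; auto split: if_splits)

lemma edge_sym: "(x, y) \<in> Gedges r n cs \<Longrightarrow> (y, x) \<in> Gedges r n cs"
  unfolding Gedges_def by auto

lemma is_path_rev:
  assumes "\<And>x y. (x, y) \<in> E \<Longrightarrow> (y, x) \<in> E" and "is_path E p"
  shows "is_path E (rev p)"
  unfolding is_path_def
proof (intro conjI allI impI)
  show "rev p \<noteq> []" "distinct (rev p)" using assms(2) unfolding is_path_def by auto
  fix i assume i: "Suc i < length (rev p)"
  define l where "l = length p"
  have "(p ! (l - Suc (Suc i)), p ! Suc (l - Suc (Suc i))) \<in> E"
    using assms(2) i unfolding is_path_def l_def by auto
  moreover have "Suc (l - Suc (Suc i)) = l - Suc i" using i l_def by simp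
  ultimately have "(p ! (l - Suc (Suc i)), p ! (l - Suc i)) \<in> E" by simp
  then show "(rev p ! i, rev p ! Suc i) \<in> E"
    using assms(1) i l_def by (simp add: rev_nth)
qed

lemma edge_path: "k < r \<Longrightarrow> i < length cs \<Longrightarrow> (j, b) \<in> cs ! i \<Longrightarrow>
   (pathv r i j b k, pathv r i j b (Suc k)) \<in> Gedges r n cs"
proof -
  assume a: "k < r" "i < length cs" "(j, b) \<in> cs ! i"
  have "(pathv r i j b k, pathv r i j b (Suc k)) \<in> {(pathv r i j b k, pathv r i j b (Suc k)) | i j b k.
        i < length cs \<and> (j, b) \<in> cs ! i \<and> k < r}" using a by blast
  then show ?thesis unfolding Gedges_def Gbase_def Un_iff by blast
qed

lemma Pth_path: "r \<ge> 1 \<Longrightarrow> i < length cs \<Longrightarrow> (j, b) \<in> cs ! i \<Longrightarrow>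
   is_path (Gedges r n cs) (Pth r i j b)"
  unfolding is_path_def
proof (intro conjI allI impI)
  assume "r \<ge> 1" "i < length cs" "(j, b) \<in> cs ! i"
  show "Pth r i j b \<noteq> []" by (simp add: Pth_def)
  show "distinct (Pth r i j b)" using Pth_distinct \<open>r \<ge> 1\<close> by blast
  fix k assume "Suc k < length (Pth r i j b)"
  then have "k < r" by (simp add: Pth_len)
  then show "(Pth r i j b ! k, Pth r i j b ! Suc k) \<in> Gedges r n cs"
    using edge_path[OF _ \<open>i < length cs\<close> \<open>(j, b) \<in> cs ! i\<close>] by (simp add: Pth_nth)
qed

definition side :: "bool \<Rightarrow> nat \<Rightarrow> bool" where
  "side b a = (if b then 2 \<le> a \<and> a \<le> 4 else 5 \<le> a \<and> a \<le> 7)"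

lemma edge_litW: "side b a \<Longrightarrow> j < n \<Longrightarrow> (litv j b, W a) \<in> Gedges r n cs"
  unfolding Gedges_def Gbase_def side_def litv_def by (cases b) auto

lemma edge_lit: "j < n \<Longrightarrow> (litv j b, litv j (\<not> b)) \<in> Gedges r n cs"
  unfolding Gedges_def Gbase_def litv_def by (cases b) auto

lemma edge_WW: "1 \<le> a \<Longrightarrow> a \<le> 7 \<Longrightarrow> 1 \<le> a' \<Longrightarrow> a' \<le> 7 \<Longrightarrow> a \<noteq> a' \<Longrightarrow> (W a, W a') \<in> Gedges r n cs"
  unfolding Gedges_def Gbase_def by auto

lemma edge_UW: "i < length cs \<Longrightarrow> 1 \<le> a \<Longrightarrow> a \<le> 4 \<Longrightarrow> (U i, W a) \<in> Gedges r n cs"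
  unfolding Gedges_def Gbase_def by auto

lemma edge_UW5: "i < length cs \<Longrightarrow> card (cs ! i) = 2 \<Longrightarrow> (U i, W 5) \<in> Gedges r n cs"
  unfolding Gedges_def Gbase_def by auto

lemma W_in: "1 \<le> a \<Longrightarrow> a \<le> 7 \<Longrightarrow> W a \<in> Gverts r n cs"
  by (simp add: Gverts_def)

lemma U_in: "i < length cs \<Longrightarrow> U i \<in> Gverts r n cs"
  by (simp add: Gverts_def)

lemma litv_in: "j < n \<Longrightarrow> litv j b \<in> Gverts r n cs"
  by (simp add: Gverts_def litv_def)

lemma pathv_in: "r \<ge> 1 \<Longrightarrow> i < length cs \<Longrightarrow> (j, b) \<in> cs ! i \<Longrightarrow> j < n \<Longrightarrow> k \<le> r \<Longrightarrow>
  pathv r i j b k \<in> Gverts r n cs"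
proof -
  assume a: "r \<ge> 1" "i < length cs" "(j, b) \<in> cs ! i" "j < n" "k \<le> r"
  show ?thesis
  proof (cases "k = 0")
    case True then show ?thesis using U_in[OF a(2)] by (simp add: pathv_def)
  next
    case False
    show ?thesis
    proof (cases "k = r")
      case True then show ?thesis using litv_in[OF a(4)] False by (simp add: pathv_def)
    next
      case F2: False
      have "S i j b k \<in> {S i j b k | i j b k. i < length cs \<and> (j, b) \<in> cs ! i \<and> 1 \<le> k \<and> k \<le> r - 1}"
        using a False F2 by auto
      moreover have eq: "pathv r i j b k = S i j b k" by (simp add: pathv_def False F2)
      ultimately show ?thesis unfolding eq Gverts_def Un_iff by blast
    qed
  qed
qed

lemma sat_jn: "two_clause_3sat n cs \<Longrightarrow> i < length cs \<Longrightarrow> (j, b) \<in> cs ! i \<Longrightarrow> j < n"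
  unfolding two_clause_3sat_def by (metis (mono_tags, lifting) case_prodD nth_mem)

lemma sat_card: "two_clause_3sat n cs \<Longrightarrow> i < length cs \<Longrightarrow> finite (cs ! i) \<and> 2 \<le> card (cs ! i) \<and> card (cs ! i) \<le> 3"
  unfolding two_clause_3sat_def by (meson nth_mem)

lemma Gverts_finite: "two_clause_3sat n cs \<Longrightarrow> finite (Gverts r n cs)"
proof -
  assume s: "two_clause_3sat n cs"
  have "Gverts r n cs \<subseteq> U ` {..<length cs} \<union> V ` {..<n} \<union> V' ` {..<n} \<union> W ` {1..7} \<union>
     (\<lambda>(i, j, b, k). S i j b k) ` ({..<length cs} \<times> {..<n} \<times> UNIV \<times> {..r})"
  proof
    fix x assume "x \<in> Gverts r n cs"
    then consider (a) "x \<in> {U i | i. i < length cs}" | (b) "x \<in> {V j | j. j < n}" | (c) "x \<in> {V' j | j. j < n}"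
      | (d) "x \<in> {W k | k. 1 \<le> k \<and> k \<le> 7}"
      | (e) "x \<in> {S i j b k | i j b k. i < length cs \<and> (j, b) \<in> cs ! i \<and> 1 \<le> k \<and> k \<le> r - 1}"
      unfolding Gverts_def Un_iff by blast
    then show "x \<in> U ` {..<length cs} \<union> V ` {..<n} \<union> V' ` {..<n} \<union> W ` {1..7} \<union>
     (\<lambda>(i, j, b, k). S i j b k) ` ({..<length cs} \<times> {..<n} \<times> UNIV \<times> {..r})"
    proof cases
      case e
      then obtain i j b k where e: "x = S i j b k" "i < length cs" "(j, b) \<in> cs ! i" "k \<le> r - 1" by blast
      then have "j < n" using sat_jn[OF s] by blast
      then have "x \<in> (\<lambda>(i, j, b, k). S i j b k) ` ({..<length cs} \<times> {..<n} \<times> UNIV \<times> {..r})"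
        using e by (intro rev_image_eqI[of "(i, j, b, k)"]) auto
      then show ?thesis by blast
    qed (blast, blast, blast, force)
  qed
  moreover have "finite (U ` {..<length cs} \<union> V ` {..<n} \<union> V' ` {..<n} \<union> W ` {1..7} \<union>
     (\<lambda>(i, j, b, k). S i j b k) ` ({..<length cs} \<times> {..<n} \<times> (UNIV :: bool set) \<times> {..r}))"
    by simp
  ultimately show ?thesis by (rule finite_subset)
qed



context
  fixes r n :: nat and cs :: "clause list" and s :: "vtx list"
  assumes r2: "r \<ge> 2" and sat3: "two_clause_3sat n cs"
    and ord: "is_order (Gverts r n cs) s"
    and bound: "\<forall>u \<in> Gverts r n cs. card (reach r (Gedges r n cs) s u) \<le> 6"
begin

lemma ds: "distinct s" using ord unfolding is_order_def by auto
lemma ss: "set s = Gverts r n cs" using ord unfolding is_order_def by auto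
lemma r1: "r \<ge> 1" using r2 by simp

lemma reach_fin: "finite (reach r (Gedges r n cs) s u)"
  by (rule finite_subset[of _ "set s"]) (auto simp: reach_def dest: before_mem)

lemma edge_reach:
  assumes e: "(x, y) \<in> Gedges r n cs" and b: "before s x y"
  shows "y \<in> reach r (Gedges r n cs) s x"
proof -
  have xy: "x \<noteq> y" using before_neq[OF ds b] .
  have "is_path (Gedges r n cs) [x, y]" unfolding is_path_def using xy e
    by (auto simp: less_Suc_eq)
  then show ?thesis unfolding reach_def using xy b r1
    by (intro CollectI conjI exI[of _ "[x, y]"]) auto
qed

lemma six_W:
  assumes x: "x \<in> Gverts r n cs" and A: "A \<subseteq> reach r (Gedges r n cs) s x" "A \<subseteq> range W" "card A \<ge> 6"
    and v: "v \<in> reach r (Gedges r n cs) s x" "v \<notin> range W"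
  shows False
proof -
  have fA: "finite A" using A(1) reach_fin finite_subset by blast
  have "v \<notin> A" using A(2) v(2) by blast
  then have "card (insert v A) = card A + 1" using fA by simp
  moreover have "card (insert v A) \<le> card (reach r (Gedges r n cs) s x)"
    using A(1) v(1) reach_fin by (intro card_mono) auto
  ultimately show False using bound x A(3) by fastforce
qed

lemma first_W: "\<exists>k0. 1 \<le> k0 \<and> k0 \<le> 7 \<and> (\<forall>a. 1 \<le> a \<and> a \<le> 7 \<and> a \<noteq> k0 \<longrightarrow> before s (W k0) (W a))"
proof -
  define I where "I = {i. i < length s \<and> s ! i \<in> W ` {1..7}}"
  have "W 1 \<in> set s" using ss W_in[of 1] by simp
  then obtain i1 where "i1 < length s" "s ! i1 = W 1" by (auto simp: in_set_conv_nth)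
  then have "i1 \<in> I" unfolding I_def by auto
  have fI: "finite I" unfolding I_def by simp
  define m where "m = Min I"
  have mI: "m \<in> I" unfolding m_def using fI \<open>i1 \<in> I\<close> Min_in by blast
  then obtain k0 where k0: "k0 \<in> {1..7}" "s ! m = W k0" "m < length s" unfolding I_def by auto
  have "\<forall>a. 1 \<le> a \<and> a \<le> 7 \<and> a \<noteq> k0 \<longrightarrow> before s (W k0) (W a)"
  proof (intro allI impI)
    fix a assume a: "1 \<le> a \<and> a \<le> 7 \<and> a \<noteq> k0"
    have "W a \<in> set s" using ss W_in[of a] a by simp
    then obtain i where i: "i < length s" "s ! i = W a" by (auto simp: in_set_conv_nth)
    then have "i \<in> I" unfolding I_def using a by auto
    then have "m \<le> i" unfolding m_def using fI by simp
    moreover have "i \<noteq> m" using i k0 a by auto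
    ultimately show "before s (W k0) (W a)" unfolding before_def using i k0
      by (intro exI[of _ m] exI[of _ i]) auto
  qed
  then show ?thesis using k0 by auto
qed

lemma card_W: "card (W ` A) = card A"
  by (rule card_image) (auto intro: inj_onI)

lemma first_nonW:
  assumes k0: "1 \<le> k0" "k0 \<le> 7" "\<forall>a. 1 \<le> a \<and> a \<le> 7 \<and> a \<noteq> k0 \<longrightarrow> before s (W k0) (W a)"
    and v: "v \<in> reach r (Gedges r n cs) s (W k0)" "v \<notin> range W"
  shows False
proof -
  define A where "A = W ` ({1..7} - {k0})"
  have "A \<subseteq> reach r (Gedges r n cs) s (W k0)"
    unfolding A_def using k0 by (auto intro!: edge_reach edge_WW)
  moreover have "card A \<ge> 6" unfolding A_def card_W using k0 by simp
  ultimately show False using six_W[OF W_in[OF k0(1,2)] _ _ _ v] unfolding A_def by blast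
qed

lemma lits_before:
  assumes k0: "1 \<le> k0" "k0 \<le> 7" "\<forall>a. 1 \<le> a \<and> a \<le> 7 \<and> a \<noteq> k0 \<longrightarrow> before s (W k0) (W a)"
    and k5: "5 \<le> k0" and j: "j < n"
  shows "before s (V' j) (W k0) \<and> before s (V j) (W k0)"
proof -
  have e1: "(W k0, V' j) \<in> Gedges r n cs"
    using edge_litW[of False k0 j n r cs] edge_sym k5 k0 j by (auto simp: side_def litv_def)
  have V'in: "V' j \<in> set s" using ss litv_in[OF j, of False] by (simp add: litv_def)
  have Vin: "V j \<in> set s" using ss litv_in[OF j, of True] by (simp add: litv_def)
  have Win: "W k0 \<in> set s" using ss W_in k0 by simp
  have b1: "before s (V' j) (W k0)"
  proof (rule ccontr)
    assume "\<not> before s (V' j) (W k0)"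
    then have "before s (W k0) (V' j)" using before_total[OF V'in Win] by auto
    then have "V' j \<in> reach r (Gedges r n cs) s (W k0)" using edge_reach e1 by blast
    then show False using first_nonW[OF k0] by blast
  qed
  have b2: "before s (V j) (W k0)"
  proof (rule ccontr)
    assume "\<not> before s (V j) (W k0)"
    then have bb: "before s (W k0) (V j)" using before_total[OF Vin Win] by auto
    have e2: "(V' j, V j) \<in> Gedges r n cs" using edge_lit[OF j, of False r cs] by (simp add: litv_def)
    have p: "is_path (Gedges r n cs) [W k0, V' j, V j]" unfolding is_path_def using e1 e2
      by (auto simp: less_Suc_eq nth_Cons')
    obtain v where "v \<in> set (tl [W k0, V' j, V j])" "v \<in> reach r (Gedges r n cs) s (W k0)"
      using first_after[OF ds p, of "W k0" r] r2 V'in Vin Win bb by auto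
    then show False using first_nonW[OF k0] by auto
  qed
  show ?thesis using b1 b2 by blast
qed

lemma later:
  assumes i: "i < length cs" and jb: "(j, b) \<in> cs ! i"
    and yz: "before s (litv j (\<not> b)) (litv j b)"
    and zW: "\<forall>a. 2 \<le> a \<and> a \<le> 7 \<longrightarrow> before s (litv j b) (W a)"
  shows "before s (U i) (litv j b)"
proof (rule ccontr)
  assume nb: "\<not> before s (U i) (litv j b)"
  have j: "j < n" using sat_jn[OF sat3 i jb] .
  have zin: "litv j b \<in> set s" using ss litv_in[OF j] by simp
  have uin: "U i \<in> set s" using ss U_in[OF i] by simp
  have zu: "before s (litv j b) (U i)" using before_total[OF zin uin] nb litv_not_U by blast
  define A where "A = W ` {2..7}"
  have A: "A \<subseteq> reach r (Gedges r n cs) s (litv j b)"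
  proof
    fix x assume "x \<in> A"
    then obtain a where a: "x = W a" "2 \<le> a" "a \<le> 7" unfolding A_def by auto
    show "x \<in> reach r (Gedges r n cs) s (litv j b)"
    proof (cases "side b a")
      case True
      then show ?thesis using edge_reach[OF edge_litW[OF True j]] zW a by auto
    next
      case False
      then have sa: "side (\<not> b) a" using a unfolding side_def by auto
      have e1: "(litv j b, litv j (\<not> b)) \<in> Gedges r n cs" using edge_lit[OF j] .
      have e2: "(litv j (\<not> b), W a) \<in> Gedges r n cs" using edge_litW[OF sa j] .
      have d: "litv j b \<noteq> litv j (\<not> b)" by (simp add: litv_inj)
      have p: "is_path (Gedges r n cs) [litv j b, litv j (\<not> b), W a]" unfolding is_path_def
        using e1 e2 d litv_not_W by (auto simp: less_Suc_eq nth_Cons')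
      have nW: "W a \<noteq> litv j b" using litv_not_W by metis
      have bW: "before s (litv j b) (W a)" using zW a by auto
      have "W a \<in> reach r (Gedges r n cs) s (litv j b)" unfolding reach_def
      proof (intro CollectI conjI exI[of _ "[litv j b, litv j (\<not> b), W a]"])
        show "is_path (Gedges r n cs) [litv j b, litv j (\<not> b), W a]" by (rule p)
        show "length [litv j b, litv j (\<not> b), W a] - 1 \<le> r" using r2 by simp
        show "\<forall>x\<in>set (butlast (tl [litv j b, litv j (\<not> b), W a])). before s x (litv j b)"
          using yz by simp
      qed (use nW bW in auto)
      then show ?thesis using a(1) by simp
    qed
  qed
  have cA: "card A \<ge> 6" unfolding A_def card_W by simp
  define P where "P = rev (Pth r i j b)"
  have pP: "is_path (Gedges r n cs) P" unfolding P_def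
    using is_path_rev[OF _ Pth_path[OF r1 i jb]] edge_sym by blast
  have hP: "hd P = litv j b" unfolding P_def using Pth_last[OF r1]
    by (simp add: hd_rev)
  have lP: "last P = U i" unfolding P_def using Pth_hd by (simp add: last_rev)
  have lenP: "length P - 1 \<le> r" unfolding P_def by (simp add: Pth_len)
  have sP: "set P \<subseteq> set s" unfolding P_def ss using pathv_in[OF r1 i jb j] by (auto simp: Pth_set)
  obtain v where v: "v \<in> set (tl P)" "v \<in> reach r (Gedges r n cs) s (litv j b)"
    using first_after[OF ds pP hP lenP sP] zu lP by auto
  have "v \<in> set P" using v(1) by (cases P) auto
  then have "v \<notin> range W" unfolding P_def using pathv_not_W by (auto simp: Pth_set)
  then show False using six_W[OF litv_in[OF j] A _ cA v(2)] unfolding A_def by blast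
qed

lemma count:
  assumes i: "i < length cs" and uW: "\<forall>a. 1 \<le> a \<and> a \<le> 7 \<longrightarrow> before s (U i) (W a)"
  shows "\<exists>(j, b) \<in> cs ! i. before s (litv j b) (U i)"
proof (rule ccontr)
  assume H: "\<not> (\<exists>(j, b) \<in> cs ! i. before s (litv j b) (U i))"
  define c where "c = cs ! i"
  have cc: "finite c" "2 \<le> card c" "card c \<le> 3" using sat_card[OF sat3 i] unfolding c_def by auto
  have uin: "U i \<in> set s" using ss U_in[OF i] by simp
  have ex: "\<forall>jb \<in> c. \<exists>v. v \<in> pathv r i (fst jb) (snd jb) ` {1..r} \<and> v \<in> reach r (Gedges r n cs) s (U i)"
  proof
    fix jb assume jbc: "jb \<in> c"
    obtain j b where jb: "jb = (j, b)" by (cases jb)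
    have jbi: "(j, b) \<in> cs ! i" using jbc jb c_def by simp
    have j: "j < n" using sat_jn[OF sat3 i jbi] .
    have zin: "litv j b \<in> set s" using ss litv_in[OF j] by simp
    have "\<not> before s (litv j b) (U i)" using H jbi by blast
    then have uz: "before s (U i) (litv j b)" using before_total[OF zin uin] litv_not_U by blast
    have sP: "set (Pth r i j b) \<subseteq> set s" unfolding ss using pathv_in[OF r1 i jbi j] by (auto simp: Pth_set)
    obtain v where v: "v \<in> set (tl (Pth r i j b))" "v \<in> reach r (Gedges r n cs) s (U i)"
    proof -
      have len: "length (Pth r i j b) - 1 \<le> r" by (simp add: Pth_len)
      have "before s (U i) (last (Pth r i j b))" using uz Pth_last[OF r1] by simp
      then show ?thesis using first_after[OF ds Pth_path[OF r1 i jbi] Pth_hd len sP] that by blast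
    qed
    then show "\<exists>v. v \<in> pathv r i (fst jb) (snd jb) ` {1..r} \<and> v \<in> reach r (Gedges r n cs) s (U i)"
      using jb by (auto simp: Pth_tl)
  qed
  then obtain f where f: "\<forall>jb \<in> c. f jb \<in> pathv r i (fst jb) (snd jb) ` {1..r} \<and> f jb \<in> reach r (Gedges r n cs) s (U i)"
    by metis
  have inj: "inj_on f c"
  proof (rule inj_onI)
    fix x y assume xy: "x \<in> c" "y \<in> c" "f x = f y"
    obtain k where k: "k \<in> {1..r}" "f x = pathv r i (fst x) (snd x) k" using f xy(1) by auto
    obtain k' where k': "k' \<in> {1..r}" "f y = pathv r i (fst y) (snd y) k'" using f xy(2) by auto
    have "fst x = fst y \<and> snd x = snd y" using pathv_tl_disj[OF r1, of k k' i "fst x" "snd x" "fst y" "snd y"] k k' xy(3) by auto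
    then show "x = y" by (simp add: prod_eq_iff)
  qed
  define A where "A = W ` {1..(if card c = 2 then 5 else 4)}"
  have A: "A \<subseteq> reach r (Gedges r n cs) s (U i)"
  proof
    fix x assume "x \<in> A"
    then obtain a where a: "x = W a" "1 \<le> a" "a \<le> (if card c = 2 then 5 else 4)" unfolding A_def by auto
    have "(U i, W a) \<in> Gedges r n cs"
    proof (cases "a \<le> 4")
      case True then show ?thesis using edge_UW[OF i] a by auto
    next
      case False then have "a = 5" "card c = 2" using a by (auto split: if_splits)
      then show ?thesis using edge_UW5[OF i] c_def by simp
    qed
    moreover have "a \<le> 7" using a(3) by (auto split: if_splits)
    ultimately show "x \<in> reach r (Gedges r n cs) s (U i)" using edge_reach uW a by auto
  qed
  have fc: "f ` c \<subseteq> reach r (Gedges r n cs) s (U i)" using f by auto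
  have disj: "A \<inter> f ` c = {}"
  proof (rule ccontr)
    assume "A \<inter> f ` c \<noteq> {}"
    then obtain x where x: "x \<in> A" "x \<in> f ` c" by blast
    from x(1) obtain a where a: "x = W a" unfolding A_def by blast
    from x(2) obtain jb where jb: "jb \<in> c" "x = f jb" by blast
    obtain k where "f jb = pathv r i (fst jb) (snd jb) k" using f jb(1) by blast
    then show False using a jb pathv_not_W by metis
  qed
  have "card (A \<union> f ` c) = card A + card c"
    using card_Un_disjoint[of A "f ` c"] disj cc(1) card_image[OF inj] A reach_fin finite_subset
    by (metis finite_imageI)
  moreover have "card A + card c = 7" unfolding A_def card_W using cc by auto
  moreover have "card (A \<union> f ` c) \<le> card (reach r (Gedges r n cs) s (U i))"
    using A fc reach_fin by (intro card_mono) auto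
  ultimately show False using bound U_in[OF i] by fastforce
qed

lemma main_sat: "satisfiable cs"
  unfolding satisfiable_def
proof (intro exI[of _ "\<lambda>j. before s (V j) (V' j)"])
  show "satisfies (\<lambda>j. before s (V j) (V' j)) cs"
    unfolding satisfies_def
  proof
    fix c assume "c \<in> set cs"
    then obtain i where i: "i < length cs" "c = cs ! i" by (auto simp: in_set_conv_nth)
    show "\<exists>(j, b) \<in> c. before s (V j) (V' j) = b"
    proof (rule ccontr)
      assume H: "\<not> (\<exists>(j, b) \<in> c. before s (V j) (V' j) = b)"
      have lat: "before s (litv j (\<not> b)) (litv j b)" if jb: "(j, b) \<in> c" for j b
      proof -
        have j: "j < n" using sat_jn[OF sat3 i(1)] jb i(2) by blast
        have Vin: "V j \<in> set s" using ss litv_in[OF j, of True] by (simp add: litv_def)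
        have V'in: "V' j \<in> set s" using ss litv_in[OF j, of False] by (simp add: litv_def)
        have ne: "before s (V j) (V' j) \<noteq> b" using H jb by blast
        show ?thesis
        proof (cases b)
          case True
          then show ?thesis using ne before_total[OF Vin V'in] by (auto simp: litv_def)
        next
          case False
          then show ?thesis using ne by (auto simp: litv_def)
        qed
      qed
      obtain k0 where k0: "1 \<le> k0" "k0 \<le> 7" "\<forall>a. 1 \<le> a \<and> a \<le> 7 \<and> a \<noteq> k0 \<longrightarrow> before s (W k0) (W a)"
        using first_W by blast
      have k0a: "before s x (W a)" if "before s x (W k0)" "1 \<le> a" "a \<le> 7" for x a
        using that k0 before_trans[OF ds] by (cases "a = k0") auto
      have cc: "finite c" "2 \<le> card c" "card c \<le> 3" using sat_card[OF sat3 i(1)] i(2) by auto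
      then have "c \<noteq> {}" by auto
      then obtain jb where jbc: "jb \<in> c" by blast
      obtain j b where jb: "(j, b) \<in> c" using jbc by (cases jb) auto
      have uin: "U i \<in> set s" using ss U_in[OF i(1)] by simp
      have Wk0in: "W k0 \<in> set s" using ss W_in k0 by simp
      have uk0: "before s (U i) (W k0)"
      proof (cases "k0 \<le> 4 \<or> (k0 = 5 \<and> card c = 2)")
        case True
        then have e: "(W k0, U i) \<in> Gedges r n cs"
          using edge_UW[OF i(1), of k0] edge_UW5[OF i(1)] edge_sym k0 i(2) by auto
        show ?thesis
        proof (rule ccontr)
          assume "\<not> before s (U i) (W k0)"
          then have "before s (W k0) (U i)" using before_total[OF uin Wk0in] by auto
          then have "U i \<in> reach r (Gedges r n cs) s (W k0)" using edge_reach e by blast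
          then show False using first_nonW[OF k0] by blast
        qed
      next
        case False
        then have k5: "5 \<le> k0" by auto
        have j: "j < n" using sat_jn[OF sat3 i(1)] jb i(2) by blast
        have zk: "before s (litv j b) (W k0)"
          using lits_before[OF k0 k5 j] by (cases b) (auto simp: litv_def)
        have "before s (U i) (litv j b)"
          using later[OF i(1) _ lat[OF jb]] jb i(2) k0a[OF zk] by auto
        then show ?thesis using zk before_trans[OF ds] by blast
      qed
      have uW: "\<forall>a. 1 \<le> a \<and> a \<le> 7 \<longrightarrow> before s (U i) (W a)" using k0a[OF uk0] by auto
      obtain j' b' where jb': "(j', b') \<in> cs ! i" "before s (litv j' b') (U i)"
        using count[OF i(1) uW] by auto
      have zW: "\<forall>a. 2 \<le> a \<and> a \<le> 7 \<longrightarrow> before s (litv j' b') (W a)"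
        using jb'(2) uW before_trans[OF ds] by auto
      have "before s (U i) (litv j' b')" using later[OF i(1) jb'(1) lat zW] jb'(1) i(2) by auto
      then show False using jb'(2) before_asym[OF ds] by blast
    qed
  qed
qed

end


theorem lemma3p15:
  fixes r n :: nat and cs :: "clause list"
  assumes "r \<ge> 2"
    and "two_clause_3sat n cs"
    and "col r (Gverts r n cs) (Gedges r n cs) \<le> 6"
  shows "satisfiable cs"
proof -
  define VV where "VV = Gverts r n cs"
  define E where "E = Gedges r n cs"
  define Ords where "Ords = {\<sigma>. is_order VV \<sigma>}"
  have fV: "finite VV" unfolding VV_def using Gverts_finite[OF assms(2)] .
  obtain s0 where "set s0 = VV" "distinct s0" using finite_distinct_list[OF fV] by blast
  then have s0: "s0 \<in> Ords" unfolding Ords_def is_order_def by simp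
  have "Ords \<subseteq> {xs. set xs \<subseteq> VV \<and> length xs \<le> card VV}"
    unfolding Ords_def is_order_def using distinct_card by fastforce
  then have fO: "finite Ords" using finite_lists_length_le[OF fV] finite_subset by blast
  define F where "F = (\<lambda>\<sigma>. Max ((\<lambda>u. card (reach r E \<sigma> u)) ` VV)) ` Ords"
  have "Min F \<in> F" unfolding F_def using fO s0 by (intro Min_in) auto
  moreover have "Min F \<le> 6" using assms(3) unfolding col_def F_def Ords_def VV_def E_def .
  ultimately obtain s where s: "s \<in> Ords" "Max ((\<lambda>u. card (reach r E s u)) ` VV) \<le> 6"
    unfolding F_def by auto
  have "\<forall>u \<in> VV. card (reach r E s u) \<le> 6"
  proof
    fix u assume "u \<in> VV"
    then have "card (reach r E s u) \<le> Max ((\<lambda>u. card (reach r E s u)) ` VV)"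
      using fV by (intro Max_ge) auto
    then show "card (reach r E s u) \<le> 6" using s(2) by simp
  qed
  then show ?thesis
    using main_sat[OF assms(1,2), of s] s(1) unfolding Ords_def VV_def E_def by simp
qed

end
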